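(* Fix $\delta>0$ and an integer $J\ge1$. For each group $g$ let $\mathcal K_{g,\mathrm{fb}}\subseteq\mathcal K_g$ (feedback users) and $\mathcal K_{g,\mathrm{vir}}=(\mathcal K_g\setminus\mathcal K_{g,\mathrm{fb}})\times\{1,\dots,J\}$ (virtual users), with given vectors $\mathbf h_k^{(j)}\in\mathbb C^{MB}$ for $(k,j)\in\mathcal K_{g,\mathrm{vir}}$. Let (R-PF) be the problem: maximize $\alpha$ over $\{\mathbf Q_g\}\in\mathcal Q$, $\{R_g\}$, $\{s_k\}_{k\in\mathcal K_{g,\mathrm{fb}}}$, $\{t_{k,j}\}_{(k,j)\in\mathcal K_{g,\mathrm{vir}}}$, $\alpha$, subject to, for all $g$: $\begin{pmatrix}R_g&\alpha\sqrt{\tau_g|\mathcal K_g|}\\ \alpha\sqrt{\tau_g|\mathcal K_g|}&\sum_{k\in\mathcal K_{g,\mathrm{fb}}}s_k+\frac1J\sum_{(k,j)\in\mathcal K_{g,\mathrm{vir}}}t_{k,j}\end{pmatrix}\succeq\mathbf 0$; $r_k(\{\mathbf Q_\ell\})+\delta^{-1}(1-s_k)\ge R_g$ for $k\in\mathcal K_{g,\mathrm{fb}}$; $r_{k,j}(\{\mathbf Q_\ell\})+\delta^{-1}(1-t_{k,j})\ge R_g$ for $(k,j)\in\mathcal K_{g,\mathrm{vir}}$; $0\le s_k\le1$, $0\le t_{k,j}\le1$. Consider the algorithm that starts from any $\{\tilde{\mathbf Q}_\ell\}\in\mathcal Q$ and at each iteration solves the convex problem obtained from (R-PF) by replacing $r_k$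 with $\bar r_k(\cdot\mid\{\tilde{\mathbf Q}_\ell\})$ and $r_{k,j}$ with $\bar r_{k,j}(\cdot\mid\{\tilde{\mathbf Q}_\ell\})$, then sets $\tilde{\mathbf Q}_\ell$ equal to the obtained $\mathbf Q_\ell$ and repeats. Then every limit point of the iterates $(\{\mathbf Q_g\},\{R_g\},\alpha,\{s_k\},\{t_{k,j}\})$ generated by this algorithm is a stationary point of (R-PF).
   Context: Setting: $B$ BSs with $M$ antennas, powers $P_b\ge0$; users partitioned into groups $\mathcal K_1,\dots,\mathcal K_G$; $\mathcal B_g$ the BSs serving group $g$; weights $\tau_g>0$; $\mathbf h_k\in\mathbb C^{MB}$ the stacked channel of user $k$. $\mathcal Q$: tuples of Hermitian PSD $MB\times MB$ matrices $(\mathbf Q_1,\dots,\mathbf Q_G)$ with $\sum_g\mathrm{tr}(\{\mathbf Q_g\}_{b,b})\le P_b$ for all $b$ ($\{\cdot\}_{b,b'}$ the $(b,b')$-th $M\times M$ block) and $\{\mathbf Q_g\}_{b,b'}=\mathbf 0$ if $b\notin\mathcal B_g$ or $b'\notin\mathcal B_g$. For a vector $\mathbf h$ and user of group $g$ define $\rho_g(\mathbf h;\{\mathbf Q_\ell\})=\log_2\big(1+\frac{\mathrm{tr}(\mathbf Q_g\mathbf h\mathbf h^H)}{\sum_{\ell\ne g}\mathrm{tr}(\mathbf Q_\ell\mathbf h\mathbf h^H)+1}\big)$ and $\bar\rho_g(\mathbf h;\{\mathbf Q_\ell\}\mid\{\tilde{\mathbf Q}_\ell\})=\log_2(1+\sum_{\ell=1}^G\mathrm{tr}(\mathbf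 Q_\ell\mathbf h\mathbf h^H))-\log_2(1+\sum_{\ell\ne g}\mathrm{tr}(\tilde{\mathbf Q}_\ell\mathbf h\mathbf h^H))-\frac{\sum_{\ell\ne g}\mathrm{tr}((\mathbf Q_\ell-\tilde{\mathbf Q}_\ell)\mathbf h\mathbf h^H)}{[1+\sum_{\ell\ne g}\mathrm{tr}(\tilde{\mathbf Q}_\ell\mathbf h\mathbf h^H)]\ln2}$. Then $r_k=\rho_g(\mathbf h_k;\cdot)$, $\bar r_k=\bar\rho_g(\mathbf h_k;\cdot\mid\cdot)$, $r_{k,j}=\rho_g(\mathbf h_k^{(j)};\cdot)$, $\bar r_{k,j}=\bar\rho_g(\mathbf h_k^{(j)};\cdot\mid\cdot)$ for $k\in\mathcal K_g$. A stationary point is a feasible point at which no feasible direction has positive directional derivative of the (max-min reformulated) objective. *)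

theory Defs
  imports "HOL-Analysis.Analysis"
begin

text \<open>
  BSs are indexed by a finite type 'b (B = CARD('b)), antennas by a finite type 'm
  (M = CARD('m)); the stacked space C^(MB) is complex^('m \<times> 'b), the entry (m,b)
  being antenna m of BS b.  Hence the (b,b')-th M x M block of an MB x MB matrix Q
  is (\<lambda>m m'. Q $ (m,b) $ (m',b')).
  Groups are indexed by a finite type 'g, users by a finite type 'k, the group of a
  user is grp k, so K_g = {k. grp k = g}.  The virtual-user copies j = 1..J are
  indexed by a finite type 'j (J = CARD('j) \<ge> 1).
  fb is the set of feedback users (K_{g,fb} = fb \<inter> K_g); a user k \<notin> fb
  of group g gives the virtual users (k,j) \<in> K_{g,vir}.
\<close>

type_synonym ('m,'b) cvec = "complex ^ ('m \<times> 'b)"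
type_synonym ('m,'b) cmat = "complex ^ ('m \<times> 'b) ^ ('m \<times> 'b)"

definition hermitian :: "('m::finite,'b::finite) cmat \<Rightarrow> bool" where
  "hermitian Q \<longleftrightarrow> (\<forall>i j. Q $ i $ j = cnj (Q $ j $ i))"

definition qform :: "('m::finite,'b::finite) cmat \<Rightarrow> ('m,'b) cvec \<Rightarrow> complex" where
  "qform Q v = (\<Sum>i\<in>UNIV. \<Sum>j\<in>UNIV. cnj (v $ i) * Q $ i $ j * v $ j)"

definition psd :: "('m::finite,'b::finite) cmat \<Rightarrow> bool" where
  "psd Q \<longleftrightarrow> hermitian Q \<and> (\<forall>v. qform Q v \<in> \<real> \<and> 0 \<le> Re (qform Q v))"

text \<open>tr(Q h h^H) = h^H Q h (real for Hermitian Q; we take the real part)\<close>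
definition trQh :: "('m::finite,'b::finite) cmat \<Rightarrow> ('m,'b) cvec \<Rightarrow> real" where
  "trQh Q h = Re (\<Sum>i\<in>UNIV. \<Sum>j\<in>UNIV. Q $ i $ j * h $ j * cnj (h $ i))"

definition blocktr :: "('m::finite,'b::finite) cmat \<Rightarrow> 'b \<Rightarrow> real" where
  "blocktr Q b = Re (\<Sum>m\<in>UNIV. Q $ (m,b) $ (m,b))"

definition Qset :: "('b::finite \<Rightarrow> real) \<Rightarrow> ('g::finite \<Rightarrow> 'b set)
                    \<Rightarrow> ('g \<Rightarrow> ('m::finite,'b) cmat) set" where
  "Qset P Bs = {Q. (\<forall>g. psd (Q g))
                 \<and> (\<forall>b. (\<Sum>g\<in>UNIV. blocktr (Q g) b) \<le> P b)
                 \<and> (\<forall>g m b m' b'. (b \<notin> Bs g \<or> b' \<notin> Bs g) \<longrightarrow> Q g $ (m,b) $ (m',b') = 0)}"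

definition rho :: "'g::finite \<Rightarrow> ('m::finite,'b::finite) cvec \<Rightarrow> ('g \<Rightarrow> ('m,'b) cmat) \<Rightarrow> real" where
  "rho g h Q = log 2 (1 + trQh (Q g) h / ((\<Sum>l\<in>UNIV - {g}. trQh (Q l) h) + 1))"

definition rhobar :: "'g::finite \<Rightarrow> ('m::finite,'b::finite) cvec \<Rightarrow> ('g \<Rightarrow> ('m,'b) cmat)
                      \<Rightarrow> ('g \<Rightarrow> ('m,'b) cmat) \<Rightarrow> real" where
  "rhobar g h Q Qt =
     log 2 (1 + (\<Sum>l\<in>UNIV. trQh (Q l) h))
     - log 2 (1 + (\<Sum>l\<in>UNIV - {g}. trQh (Qt l) h))
     - (\<Sum>l\<in>UNIV - {g}. trQh (Q l - Qt l) h)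
         / ((1 + (\<Sum>l\<in>UNIV - {g}. trQh (Qt l) h)) * ln 2)"

definition psd2 :: "real \<Rightarrow> real \<Rightarrow> real \<Rightarrow> bool" where
  "psd2 a b c \<longleftrightarrow> (\<forall>x y. 0 \<le> a * x\<^sup>2 + 2 * b * x * y + c * y\<^sup>2)"

text \<open>The variables
  s_k exist only for feedback users and t_{k,j} only for non-feedback users; the
  unused coordinates are pinned to 0 in the feasible set.\<close>
type_synonym ('g,'m,'b,'k,'j) pt =
  "('g \<Rightarrow> ('m,'b) cmat) \<times> ('g \<Rightarrow> real) \<times> ('k \<Rightarrow> real) \<times> ('k \<Rightarrow> 'j \<Rightarrow> real) \<times> real"

definition feas ::
  "('b::finite \<Rightarrow> real) \<Rightarrow> ('g::finite \<Rightarrow> 'b set) \<Rightarrow> ('g \<Rightarrow> real) \<Rightarrow> ('k::finite \<Rightarrow> 'g)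
   \<Rightarrow> 'k set \<Rightarrow> real
   \<Rightarrow> ('k \<Rightarrow> ('g \<Rightarrow> ('m::finite,'b) cmat) \<Rightarrow> real)
   \<Rightarrow> ('k \<Rightarrow> 'j::finite \<Rightarrow> ('g \<Rightarrow> ('m,'b) cmat) \<Rightarrow> real)
   \<Rightarrow> ('g,'m,'b,'k,'j) pt set" where
  "feas P Bs tau grp fb delta rfb rvir =
     {(Q, R, s, t, alpha).
        Q \<in> Qset P Bs
      \<and> (\<forall>g. psd2 (R g) (alpha * sqrt (tau g * real (card {k. grp k = g})))
                  ((\<Sum>k\<in>{k\<in>fb. grp k = g}. s k)
                   + (1 / real CARD('j)) * (\<Sum>k\<in>{k. k \<notin> fb \<and> grp k = g}. \<Sum>j\<in>UNIV. t k j)))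
      \<and> (\<forall>k\<in>fb. rfb k Q + (1 - s k) / delta \<ge> R (grp k))
      \<and> (\<forall>k j. k \<notin> fb \<longrightarrow> rvir k j Q + (1 - t k j) / delta \<ge> R (grp k))
      \<and> (\<forall>k\<in>fb. 0 \<le> s k \<and> s k \<le> 1)
      \<and> (\<forall>k j. k \<notin> fb \<longrightarrow> 0 \<le> t k j \<and> t k j \<le> 1)
      \<and> (\<forall>k. k \<notin> fb \<longrightarrow> s k = 0)
      \<and> (\<forall>k j. k \<in> fb \<longrightarrow> t k j = 0)}"

definition feas_RPF where
  "feas_RPF P Bs tau grp fb delta h hv =
     feas P Bs tau grp fb delta (\<lambda>k Q. rho (grp k) (h k) Q) (\<lambda>k j Q. rho (grp k) (hv k j) Q)"

definition feas_surr where
  "feas_surr P Bs tau grp fb delta h hv Qt =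
     feas P Bs tau grp fb delta (\<lambda>k Q. rhobar (grp k) (h k) Q Qt)
                                (\<lambda>k j Q. rhobar (grp k) (hv k j) Q Qt)"

definition obj :: "('g,'m,'b,'k,'j) pt \<Rightarrow> real" where
  "obj x = snd (snd (snd (snd x)))"

definition optimal_in :: "('g,'m::finite,'b::finite,'k,'j) pt set \<Rightarrow> ('g,'m,'b,'k,'j) pt \<Rightarrow> bool" where
  "optimal_in F x \<longleftrightarrow> x \<in> F \<and> (\<forall>y\<in>F. obj y \<le> obj x)"

definition pstep :: "('g,'m::finite,'b::finite,'k,'j) pt \<Rightarrow> real \<Rightarrow> ('g,'m,'b,'k,'j) pt
                     \<Rightarrow> ('g,'m,'b,'k,'j) pt" where
  "pstep x \<tau> d = (case x of (Q, R, s, t, a) \<Rightarrow> case d of (dQ, dR, ds, dt, da) \<Rightarrow>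
      ((\<lambda>g. Q g + \<tau> *\<^sub>R dQ g), (\<lambda>g. R g + \<tau> * dR g), (\<lambda>k. s k + \<tau> * ds k),
       (\<lambda>k j. t k j + \<tau> * dt k j), a + \<tau> * da))"

definition feasible_direction where
  "feasible_direction F x d \<longleftrightarrow> (\<exists>\<epsilon>>0. \<forall>\<tau>. 0 < \<tau> \<and> \<tau> \<le> \<epsilon> \<longrightarrow> pstep x \<tau> d \<in> F)"

definition stationary where
  "stationary F x \<longleftrightarrow> x \<in> F \<and>
     \<not> (\<exists>d D. feasible_direction F x d
              \<and> ((\<lambda>\<tau>. (obj (pstep x \<tau> d) - obj x) / \<tau>) \<longlongrightarrow> D) (at_right 0) \<and> D > 0)"

definition limit_point :: "(nat \<Rightarrow> 'a::topological_space) \<Rightarrow> 'a \<Rightarrow> bool" where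
  "limit_point z x \<longleftrightarrow> (\<exists>\<sigma>. strict_mono \<sigma> \<and> (z \<circ> \<sigma>) \<longlonglongrightarrow> x)"

end

theory Submission
  imports Defs
begin
lemma tendsto_fun_app: "(f \<longlongrightarrow> l) F \<Longrightarrow> ((\<lambda>n. f n i) \<longlongrightarrow> l i) F"
  by (rule continuous_on_tendsto_compose[OF continuous_on_product_coordinates]) auto

lemma trQh_add_scale: "trQh (A + c *\<^sub>R B) v = trQh A v + c * trQh B v"
  unfolding trQh_def
  by (simp only: vector_add_component vector_scaleR_component)
     (simp add: scaleR_conv_of_real algebra_simps sum.distrib sum_distrib_left)

lemma trQh_diff: "trQh (A - B) v = trQh A v - trQh B v"
  unfolding trQh_def by (simp add: algebra_simps sum_subtractf)

lemma trQh_qform: "trQh Q v = Re (qform Q v)"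
  unfolding trQh_def qform_def by (simp add: mult.commute mult.left_commute)

lemma trQh_nonneg: "psd Q \<Longrightarrow> 0 \<le> trQh Q v"
  unfolding psd_def trQh_qform by auto

lemma Qset_trQh: "Q \<in> Qset P Bs \<Longrightarrow> 0 \<le> trQh (Q l) v"
  unfolding Qset_def by (auto intro: trQh_nonneg)

lemma gap_real:
  fixes q I J :: real
  assumes "0 \<le> q" "0 \<le> I" "0 \<le> J"
  shows "0 \<le> log 2 (1 + q / (I + 1)) - (log 2 (1 + (q + I)) - log 2 (1 + J) - (I - J) / ((1 + J) * ln 2))"
    and "log 2 (1 + q / (I + 1)) - (log 2 (1 + (q + I)) - log 2 (1 + J) - (I - J) / ((1 + J) * ln 2)) \<le> (I - J)^2 / ln 2"
proof -
  have l2: "0 < ln (2::real)" by simp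
  have e1: "1 + q / (I + 1) = (1 + (q + I)) / (1 + I)" using assms by (simp add: field_simps)
  have A: "log 2 (1 + q / (I + 1)) = (ln (1 + (q + I)) - ln (1 + I)) / ln 2"
    unfolding e1 log_def using assms by (simp add: ln_div)
  have B: "log 2 (1 + (q + I)) - log 2 (1 + J) - (I - J) / ((1 + J) * ln 2)
      = (ln (1 + (q + I)) - ln (1 + J) - (I - J) / (1 + J)) / ln 2"
  proof -
    have "(I - J) / ((1 + J) * ln 2) = ((I - J) / (1 + J)) / ln 2" by simp
    then show ?thesis unfolding log_def by (simp add: diff_divide_distrib)
  qed
  define N where "N = ln (1 + J) - ln (1 + I) + (I - J) / (1 + J)"
  have diff: "log 2 (1 + q / (I + 1)) - (log 2 (1 + (q + I)) - log 2 (1 + J) - (I - J) / ((1 + J) * ln 2)) = N / ln 2"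
    unfolding A B N_def using l2 by (simp add: field_simps)
  have u1: "ln ((1 + I) / (1 + J)) \<le> (1 + I) / (1 + J) - 1"
    by (rule ln_le_minus_one) (use assms in auto)
  have u2: "ln ((1 + J) / (1 + I)) \<le> (1 + J) / (1 + I) - 1"
    by (rule ln_le_minus_one) (use assms in auto)
  have u1': "ln (1 + I) - ln (1 + J) \<le> (I - J) / (1 + J)"
    using u1 assms by (simp add: ln_div field_simps)
  have u2': "ln (1 + J) - ln (1 + I) \<le> (J - I) / (1 + I)"
    using u2 assms by (simp add: ln_div field_simps)
  have N0: "0 \<le> N" using u1' unfolding N_def by simp
  have "N \<le> (J - I) / (1 + I) + (I - J) / (1 + J)" using u2' unfolding N_def by simp
  also have "\<dots> = (I - J)^2 / ((1 + I) * (1 + J))"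
    using assms by (simp add: field_simps power2_eq_square)
  also have "\<dots> \<le> (I - J)^2"
  proof -
    have "1 \<le> (1 + I) * (1 + J)" using assms by (simp add: algebra_simps)
    then show ?thesis by (simp add: divide_le_eq mult_le_cancel_left1)
  qed
  finally have N1: "N \<le> (I - J)^2" .
  show "0 \<le> log 2 (1 + q / (I + 1)) - (log 2 (1 + (q + I)) - log 2 (1 + J) - (I - J) / ((1 + J) * ln 2))"
    unfolding diff using N0 l2 by simp
  show "log 2 (1 + q / (I + 1)) - (log 2 (1 + (q + I)) - log 2 (1 + J) - (I - J) / ((1 + J) * ln 2)) \<le> (I - J)^2 / ln 2"
    unfolding diff using N1 l2 by (simp add: divide_right_mono)
qed
definition Iint :: "('g::finite \<Rightarrow> ('m::finite,'b::finite) cmat) \<Rightarrow> 'g \<Rightarrow> ('m,'b) cvec \<Rightarrow> real" where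
  "Iint Q g v = (\<Sum>l\<in>UNIV - {g}. trQh (Q l) v)"

lemma Iint_nonneg: "Q \<in> Qset P Bs \<Longrightarrow> 0 \<le> Iint Q g v"
  unfolding Iint_def by (auto intro!: sum_nonneg Qset_trQh)

lemma rho_eq: "rho g v Q = log 2 (1 + trQh (Q g) v / (Iint Q g v + 1))"
  unfolding rho_def Iint_def ..

lemma rhobar_eq: "rhobar g v Q Qt = log 2 (1 + (trQh (Q g) v + Iint Q g v)) - log 2 (1 + Iint Qt g v)
    - (Iint Q g v - Iint Qt g v) / ((1 + Iint Qt g v) * ln 2)"
proof -
  have "(\<Sum>l\<in>UNIV. trQh (Q l) v) = trQh (Q g) v + Iint Q g v"
    unfolding Iint_def by (rule sum.remove) auto
  moreover have "(\<Sum>l\<in>UNIV - {g}. trQh (Q l - Qt l) v) = Iint Q g v - Iint Qt g v"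
    unfolding Iint_def trQh_diff by (rule sum_subtractf)
  ultimately show ?thesis unfolding rhobar_def Iint_def by simp
qed

lemma gap:
  assumes "Q \<in> Qset P Bs" "Qt \<in> Qset P' Bs'"
  shows "rhobar g v Q Qt \<le> rho g v Q"
    and "rho g v Q - rhobar g v Q Qt \<le> (Iint Q g v - Iint Qt g v)^2 / ln 2"
  using gap_real[OF Qset_trQh[OF assms(1)] Iint_nonneg[OF assms(1)] Iint_nonneg[OF assms(2)],
      of g v g v g v]
  unfolding rho_eq rhobar_eq by auto

lemma rhobar_self:
  assumes "Q \<in> Qset P Bs"
  shows "rhobar g v Q Q = rho g v Q"
  using gap[OF assms assms, of g v] by simp

lemma psd2_scale:
  assumes "psd2 R b S" "0 \<le> c"
  shows "psd2 (c * R) (sqrt c * b) S"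
  unfolding psd2_def
proof (intro allI)
  fix x y :: real
  have "0 \<le> R * (sqrt c * x)^2 + 2 * b * (sqrt c * x) * y + S * y^2"
    using assms(1) unfolding psd2_def by blast
  also have "R * (sqrt c * x)^2 = c * R * x^2" using assms(2) by (simp add: power_mult_distrib)
  finally show "0 \<le> c * R * x\<^sup>2 + 2 * (sqrt c * b) * x * y + S * y\<^sup>2" by (simp add: ac_simps)
qed

lemma psd2_intro:
  assumes "0 \<le> R" "0 \<le> S" "b^2 \<le> R * S"
  shows "psd2 R b S"
  unfolding psd2_def
proof (intro allI)
  fix x y :: real
  show "0 \<le> R * x\<^sup>2 + 2 * b * x * y + S * y\<^sup>2"
  proof (cases "R = 0")
    case True
    then have "b^2 \<le> 0" using assms(3) by simp
    then have "b = 0" by (simp add: power2_less_eq_zero_iff)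
    then show ?thesis using True assms(2) by simp
  next
    case False
    then have Rp: "0 < R" using assms(1) by simp
    have "R * (R * x\<^sup>2 + 2 * b * x * y + S * y\<^sup>2) = (R*x + b*y)^2 + (R*S - b^2) * y^2"
      by (simp only: power2_eq_square) (simp add: ring_distribs mult_ac)
    also have "\<dots> \<ge> 0" using assms(3) by (intro add_nonneg_nonneg mult_nonneg_nonneg) auto
    finally have "0 \<le> R * (R * x\<^sup>2 + 2 * b * x * y + S * y\<^sup>2)" .
    then show ?thesis using Rp by (metis mult_le_cancel_left_pos mult_zero_right)
  qed
qed

lemma psd2_pos:
  assumes "psd2 R b S" "b \<noteq> 0"
  shows "0 < R"
proof -
  have R0: "0 \<le> R" using spec[OF spec[OF assms(1)[unfolded psd2_def], of 1], of 0] by simp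
  have S0: "0 \<le> S" using spec[OF spec[OF assms(1)[unfolded psd2_def], of 0], of 1] by simp
  show ?thesis
  proof (rule ccontr)
    assume "\<not> 0 < R"
    then have "R = 0" using R0 by simp
    then have "0 \<le> 2 * b * (-(S+1)/b) * 1 + S * 1^2"
      using spec[OF spec[OF assms(1)[unfolded psd2_def], of "-(S+1)/b"], of 1] by simp
    also have "\<dots> = - S - 2" using assms(2) by (simp add: field_simps)
    finally show False using S0 by simp
  qed
qed


lemma lim_ge: "(f \<longlongrightarrow> (x::real)) sequentially \<Longrightarrow> (\<And>n. a \<le> f n) \<Longrightarrow> a \<le> x"
  by (rule tendsto_lowerbound) (auto intro: always_eventually)

lemma lim_le: "(f \<longlongrightarrow> (x::real)) sequentially \<Longrightarrow> (\<And>n. f n \<le> a) \<Longrightarrow> x \<le> a"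
  by (rule tendsto_upperbound) (auto intro: always_eventually)

lemma lim_const: fixes f :: "nat \<Rightarrow> 'a::t2_space" shows "(f \<longlongrightarrow> x) sequentially \<Longrightarrow> (\<And>n. f n = c) \<Longrightarrow> x = c"
proof -
  assume a: "f \<longlonglongrightarrow> x" "\<And>n. f n = c"
  have "f = (\<lambda>n. c)" using a(2) by auto
  then have "f \<longlonglongrightarrow> c" by simp
  then show ?thesis using a(1) LIMSEQ_unique by blast
qed

lemma trQh_tendsto: "(Qs \<longlongrightarrow> Q) F \<Longrightarrow> ((\<lambda>n. trQh (Qs n) v) \<longlongrightarrow> trQh Q v) F"
  unfolding trQh_def by (intro tendsto_intros)

lemma qform_tendsto: "(Qs \<longlongrightarrow> Q) F \<Longrightarrow> ((\<lambda>n. qform (Qs n) v) \<longlongrightarrow> qform Q v) F"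
  unfolding qform_def by (intro tendsto_intros)

lemma blocktr_tendsto: "(Qs \<longlongrightarrow> Q) F \<Longrightarrow> ((\<lambda>n. blocktr (Qs n) b) \<longlongrightarrow> blocktr Q b) F"
  unfolding blocktr_def by (intro tendsto_intros)

lemma Iint_tendsto: "(\<And>g. ((\<lambda>n. Qs n g) \<longlongrightarrow> Q g) F) \<Longrightarrow> ((\<lambda>n. Iint (Qs n) g v) \<longlongrightarrow> Iint Q g v) F"
  unfolding Iint_def by (intro tendsto_intros trQh_tendsto)

lemma Qset_closed:
  assumes Z: "\<And>n. Qs n \<in> Qset P Bs" and L: "\<And>g. (\<lambda>n. Qs n g) \<longlonglongrightarrow> Q g"
  shows "Q \<in> Qset P Bs"
proof -
  have E: "(\<lambda>n. Qs n g $ i $ j) \<longlonglongrightarrow> Q g $ i $ j" for g i j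
    by (intro tendsto_intros L)
  have herm: "hermitian (Q g)" for g
    unfolding hermitian_def
  proof (intro allI)
    fix i j
    have "(\<lambda>n. cnj (Qs n g $ j $ i)) \<longlonglongrightarrow> cnj (Q g $ j $ i)" by (intro tendsto_intros E)
    moreover have "(\<lambda>n. cnj (Qs n g $ j $ i)) = (\<lambda>n. Qs n g $ i $ j)"
    proof (rule ext)
      fix n
      have "hermitian (Qs n g)" using Z unfolding Qset_def psd_def by auto
      then show "cnj (Qs n g $ j $ i) = Qs n g $ i $ j" unfolding hermitian_def by (metis complex_cnj_cnj)
    qed
    ultimately show "Q g $ i $ j = cnj (Q g $ j $ i)" using E LIMSEQ_unique by metis
  qed
  have qf: "qform (Q g) v \<in> \<real> \<and> 0 \<le> Re (qform (Q g) v)" for g v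
  proof
    have "(\<lambda>n. Im (qform (Qs n g) v)) \<longlonglongrightarrow> Im (qform (Q g) v)"
      by (intro tendsto_intros qform_tendsto L)
    moreover have "\<And>n. Im (qform (Qs n g) v) = 0"
      using Z unfolding Qset_def psd_def by (auto simp: complex_is_Real_iff)
    ultimately have "Im (qform (Q g) v) = 0" by (rule lim_const)
    then show "qform (Q g) v \<in> \<real>" by (simp add: complex_is_Real_iff)
    have "(\<lambda>n. Re (qform (Qs n g) v)) \<longlonglongrightarrow> Re (qform (Q g) v)"
      by (intro tendsto_intros qform_tendsto L)
    moreover have "\<And>n. 0 \<le> Re (qform (Qs n g) v)"
      using Z unfolding Qset_def psd_def by auto
    ultimately show "0 \<le> Re (qform (Q g) v)" by (rule lim_ge)
  qed
  have pw: "(\<Sum>g\<in>UNIV. blocktr (Q g) b) \<le> P b" for b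
  proof -
    have "(\<lambda>n. \<Sum>g\<in>UNIV. blocktr (Qs n g) b) \<longlonglongrightarrow> (\<Sum>g\<in>UNIV. blocktr (Q g) b)"
      by (intro tendsto_intros blocktr_tendsto L)
    moreover have "\<And>n. (\<Sum>g\<in>UNIV. blocktr (Qs n g) b) \<le> P b"
      using Z unfolding Qset_def by auto
    ultimately show ?thesis by (rule lim_le)
  qed
  have zr: "Q g $ (m,b) $ (m',b') = 0" if "b \<notin> Bs g \<or> b' \<notin> Bs g" for g m b m' b'
  proof (rule lim_const[OF E])
    show "\<And>n. Qs n g $ (m, b) $ (m', b') = 0" using Z that unfolding Qset_def by auto
  qed
  show ?thesis unfolding Qset_def psd_def using herm qf pw zr by auto
qed

lemma rho_tendsto:
  assumes "Q \<in> Qset P Bs" "\<And>g. (\<lambda>n. Qs n g) \<longlonglongrightarrow> Q g"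
  shows "(\<lambda>n. rho g v (Qs n)) \<longlonglongrightarrow> rho g v Q"
  unfolding rho_eq
proof (intro tendsto_intros trQh_tendsto Iint_tendsto assms(2))
  have "0 \<le> trQh (Q g) v" "0 \<le> Iint Q g v" using assms(1) by (auto intro: Qset_trQh Iint_nonneg)
  moreover from this have "0 \<le> trQh (Q g) v / (Iint Q g v + 1)" by simp
  ultimately show "1 + trQh (Q g) v / (Iint Q g v + 1) \<noteq> 0" "Iint Q g v + 1 \<noteq> 0"
    by linarith+
qed auto

lemma feas_RPF_closed:
  fixes Qs :: "nat \<Rightarrow> 'g::finite \<Rightarrow> ('m::finite,'b::finite) cmat"
    and ts :: "nat \<Rightarrow> 'k::finite \<Rightarrow> 'j::finite \<Rightarrow> real"
  assumes Z: "\<And>n. (Qs n, Rs n, ss n, ts n, as n) \<in> feas_RPF P Bs tau grp fb delta h hv"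
    and LQ: "\<And>g. (\<lambda>n. Qs n g) \<longlonglongrightarrow> Q g" and LR: "\<And>g. (\<lambda>n. Rs n g) \<longlonglongrightarrow> R g"
    and Ls: "\<And>k. (\<lambda>n. ss n k) \<longlonglongrightarrow> s k" and Lt: "\<And>k j. (\<lambda>n. ts n k j) \<longlonglongrightarrow> t k j"
    and La: "as \<longlonglongrightarrow> a" and dp: "delta \<noteq> 0"
  shows "(Q, R, s, t, a) \<in> feas_RPF P Bs tau grp fb delta h hv"
proof -
  note Z' = Z[unfolded feas_RPF_def feas_def, simplified]
  have QQ: "Q \<in> Qset P Bs" by (rule Qset_closed[OF _ LQ]) (use Z' in blast)
  have P2: "psd2 (R g) (a * sqrt (tau g * real (card {k. grp k = g})))
                  ((\<Sum>k\<in>{k\<in>fb. grp k = g}. s k)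
                   + (1 / real CARD('j)) * (\<Sum>k\<in>{k. k \<notin> fb \<and> grp k = g}. \<Sum>j\<in>UNIV. t k j))" for g
    unfolding psd2_def
  proof (intro allI)
    fix x y :: real
    have "(\<lambda>n. Rs n g * x\<^sup>2 + 2 * (as n * sqrt (tau g * real (card {k. grp k = g}))) * x * y +
       ((\<Sum>k\<in>{k\<in>fb. grp k = g}. ss n k)
                   + (1 / real CARD('j)) * (\<Sum>k\<in>{k. k \<notin> fb \<and> grp k = g}. \<Sum>j\<in>UNIV. ts n k j)) * y\<^sup>2)
      \<longlonglongrightarrow> R g * x\<^sup>2 + 2 * (a * sqrt (tau g * real (card {k. grp k = g}))) * x * y +
       ((\<Sum>k\<in>{k\<in>fb. grp k = g}. s k)
                   + (1 / real CARD('j)) * (\<Sum>k\<in>{k. k \<notin> fb \<and> grp k = g}. \<Sum>j\<in>UNIV. t k j)) * y\<^sup>2"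
      by (intro tendsto_intros LR Ls Lt La)
    then show "0 \<le> R g * x\<^sup>2 + 2 * (a * sqrt (tau g * real (card {k. grp k = g}))) * x * y +
       ((\<Sum>k\<in>{k\<in>fb. grp k = g}. s k)
                   + (1 / real CARD('j)) * (\<Sum>k\<in>{k. k \<notin> fb \<and> grp k = g}. \<Sum>j\<in>UNIV. t k j)) * y\<^sup>2"
      by (rule lim_ge) (use Z' in \<open>auto simp: psd2_def\<close>)
  qed
  have RF: "rho (grp k) (h k) Q + (1 - s k) / delta \<ge> R (grp k)" if "k \<in> fb" for k
  proof -
    have "(\<lambda>n. rho (grp k) (h k) (Qs n) + (1 - ss n k) / delta - Rs n (grp k))
       \<longlonglongrightarrow> rho (grp k) (h k) Q + (1 - s k) / delta - R (grp k)"
      by (intro tendsto_intros rho_tendsto[OF QQ LQ] Ls LR) (simp add: dp)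
    then have "0 \<le> rho (grp k) (h k) Q + (1 - s k) / delta - R (grp k)"
      by (rule lim_ge) (use Z' that in force)
    then show ?thesis by simp
  qed
  have RV: "rho (grp k) (hv k j) Q + (1 - t k j) / delta \<ge> R (grp k)" if "k \<notin> fb" for k j
  proof -
    have "(\<lambda>n. rho (grp k) (hv k j) (Qs n) + (1 - ts n k j) / delta - Rs n (grp k))
       \<longlonglongrightarrow> rho (grp k) (hv k j) Q + (1 - t k j) / delta - R (grp k)"
      by (intro tendsto_intros rho_tendsto[OF QQ LQ] Lt LR) (simp add: dp)
    then have "0 \<le> rho (grp k) (hv k j) Q + (1 - t k j) / delta - R (grp k)"
      by (rule lim_ge) (use Z' that in force)
    then show ?thesis by simp
  qed
  have S1: "0 \<le> s k \<and> s k \<le> 1" if "k \<in> fb" for k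
    using lim_ge[OF Ls, of 0 k] lim_le[OF Ls, of k 1] Z' that by force
  have T1: "0 \<le> t k j \<and> t k j \<le> 1" if "k \<notin> fb" for k j
    using lim_ge[OF Lt, of 0 k j] lim_le[OF Lt, of k j 1] Z' that by force
  have S0: "s k = 0" if "k \<notin> fb" for k
    using lim_const[OF Ls, of k 0] Z' that by force
  have T0: "t k j = 0" if "k \<in> fb" for k j
    using lim_const[OF Lt, of k j 0] Z' that by force
  show ?thesis unfolding feas_RPF_def feas_def
    using QQ P2 RF RV S1 T1 S0 T0 by simp
qed

lemma choose_ineq:
  fixes tau da ax Rx Rp D c :: real
  assumes "0 < tau" "0 < da" "0 < ax" "0 < Rx" "Rx / 2 \<le> Rp"
    "4 * tau * D^2 * (ax + tau * da) < ln 2 * da * Rx"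
    "tau * da / (2 * (ax + tau * da)) \<le> 1 - c"
  shows "(tau * D)^2 / ln 2 < (1 - c) * Rp"
proof -
  define A where "A = ax + tau * da"
  have A: "0 < A" unfolding A_def using assms by (simp add: add_pos_pos)
  have l2: "0 < ln (2::real)" by simp
  have "0 \<le> tau * da / (2 * A)" using A assms by simp
  then have c1: "0 \<le> 1 - c" using assms(7)[folded A_def] by linarith
  have "tau * da / (2 * A) * (Rx / 2) \<le> (1 - c) * Rp"
    using assms(7)[folded A_def] assms(5) assms(4) c1 by (intro mult_mono) auto
  moreover have "tau * da / (2 * A) * (Rx / 2) = tau * (da * Rx) / (4 * A)" by (simp add: field_simps)
  moreover have "(tau * D)^2 / ln 2 < tau * (da * Rx) / (4 * A)"
  proof -
    have "(tau * D)^2 * (4 * A) = tau * (4 * tau * D^2 * A)" by (simp add: power2_eq_square)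
    also have "\<dots> < tau * (ln 2 * da * Rx)"
      using assms(6)[folded A_def] assms(1) by (intro mult_strict_left_mono) auto
    finally have "(tau * D)^2 * (4 * A) < tau * (da * Rx) * ln 2" by (simp add: ac_simps)
    then show ?thesis using A l2 by (simp add: field_simps)
  qed
  ultimately show ?thesis by linarith
qed

lemma rho_nonneg: "Q \<in> Qset P Bs \<Longrightarrow> 0 \<le> rho g v Q"
proof -
  assume QQ: "Q \<in> Qset P Bs"
  have "0 \<le> trQh (Q g) v / (Iint Q g v + 1)"
    using Qset_trQh[OF QQ, of g v] Iint_nonneg[OF QQ, of g v] by simp
  then show ?thesis unfolding rho_eq by simp
qed

lemma witness:
  fixes Qt :: "'g::finite \<Rightarrow> ('m::finite,'b::finite) cmat" and grp :: "'k::finite \<Rightarrow> 'g"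
  assumes QQ: "Qt \<in> Qset P Bs" and tp: "\<forall>g. 0 < tau g" and dp: "0 < delta"
  shows "\<exists>p \<in> (feas_surr P Bs tau grp fb delta h hv Qt :: ('g,'m,'b,'k,'j::finite) pt set). 0 < obj p"
proof -
  define T where "T = (\<Sum>g\<in>UNIV. tau g)"
  have Tg: "tau g \<le> T" for g unfolding T_def using tp by (intro member_le_sum) (auto intro: less_imp_le)
  have T0: "0 < T" using Tg[of undefined] tp by (meson less_le_trans)
  define a0 where "a0 = 1 / (2 * sqrt (delta * T))"
  have a0: "0 < a0" unfolding a0_def using dp T0 by simp
  have a0sq: "a0^2 = 1 / (4 * delta * T)" unfolding a0_def using dp T0
    by (simp add: power_divide power_mult_distrib)
  define s0 :: "'k \<Rightarrow> real" where "s0 k = (if k \<in> fb then 1/2 else 0)" for k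
  define t0 :: "'k \<Rightarrow> 'j \<Rightarrow> real" where "t0 k j = (if k \<notin> fb then 1/2 else 0)" for k j
  have Sg: "(\<Sum>k\<in>{k\<in>fb. grp k = g}. s0 k)
                   + (1 / real CARD('j)) * (\<Sum>k\<in>{k. k \<notin> fb \<and> grp k = g}. \<Sum>j\<in>UNIV. t0 k j)
         = real (card {k. grp k = g}) / 2" for g
  proof -
    have 1: "(\<Sum>k\<in>{k\<in>fb. grp k = g}. s0 k) = real (card {k\<in>fb. grp k = g}) / 2"
      unfolding s0_def by simp
    have 2: "(\<Sum>k\<in>{k. k \<notin> fb \<and> grp k = g}. \<Sum>j\<in>UNIV. t0 k j)
        = real (card {k. k \<notin> fb \<and> grp k = g}) * (real CARD('j) / 2)"
      unfolding t0_def by simp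
    have 3: "card {k. grp k = g} = card {k\<in>fb. grp k = g} + card {k. k \<notin> fb \<and> grp k = g}"
    proof -
      have "{k. grp k = g} = {k\<in>fb. grp k = g} \<union> {k. k \<notin> fb \<and> grp k = g}" by auto
      then show ?thesis by (simp add: card_Un_disjoint disjoint_iff)
    qed
    show ?thesis unfolding 1 2 3 by (simp add: field_simps)
  qed
  define p :: "('g,'m,'b,'k,'j) pt" where "p = (Qt, (\<lambda>g. 1 / (2 * delta)), s0, t0, a0)"
  have P2: "psd2 (1 / (2 * delta)) (a0 * sqrt (tau g * real (card {k. grp k = g}))) (real (card {k. grp k = g}) / 2)" for g
  proof (rule psd2_intro)
    show "0 \<le> 1 / (2 * delta)" using dp by simp
    show "0 \<le> real (card {k. grp k = g}) / 2" by simp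
    have "(a0 * sqrt (tau g * real (card {k. grp k = g})))^2 = a0^2 * tau g * real (card {k. grp k = g})"
      using tp by (simp add: power_mult_distrib less_imp_le)
    also have "\<dots> = tau g / (4 * delta * T) * real (card {k. grp k = g})" unfolding a0sq by simp
    also have "\<dots> \<le> T / (4 * delta * T) * real (card {k. grp k = g})"
      using Tg[of g] dp T0 by (intro mult_right_mono divide_right_mono) auto
    also have "\<dots> = 1 / (2 * delta) * (real (card {k. grp k = g}) / 2)" using T0 by simp
    finally show "(a0 * sqrt (tau g * real (card {k. grp k = g})))\<^sup>2
        \<le> 1 / (2 * delta) * (real (card {k. grp k = g}) / 2)" .
  qed
  have P2': "psd2 (1 / (2 * delta)) (a0 * sqrt (tau g * real (card {k. grp k = g})))
     ((\<Sum>k\<in>{k\<in>fb. grp k = g}. s0 k)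
                   + (1 / real CARD('j)) * (\<Sum>k\<in>{k. k \<notin> fb \<and> grp k = g}. \<Sum>j\<in>UNIV. t0 k j))" for g
    by (subst Sg) (rule P2)
  have RS: "rhobar g v Qt Qt + (1 - 1/2) / delta \<ge> 1 / (2 * delta)" for g v
    using rhobar_self[OF QQ] rho_nonneg[OF QQ] by simp
  have "p \<in> feas_surr P Bs tau grp fb delta h hv Qt"
    using QQ P2' RS unfolding p_def feas_surr_def feas_def s0_def t0_def
    by simp
  moreover have "0 < obj p" unfolding p_def obj_def using a0 by simp
  ultimately show ?thesis by blast
qed

lemma feas_scale:
  fixes t :: "'k::finite \<Rightarrow> 'j::finite \<Rightarrow> real"
  assumes "(Q, R, s, t, a) \<in> feas P Bs tau grp fb delta rfb rvir" "0 \<le> c" "c \<le> 1"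
    "\<forall>k\<in>fb. rfb k Q - rfb' k Q \<le> (1 - c) * R (grp k)"
    "\<forall>k j. k \<notin> fb \<longrightarrow> rvir k j Q - rvir' k j Q \<le> (1 - c) * R (grp k)"
  shows "(Q, (\<lambda>g. c * R g), s, t, sqrt c * a) \<in> feas P Bs tau grp fb delta rfb' rvir'"
proof -
  note F = assms(1)[unfolded feas_def, simplified]
  have "psd2 (c * R g) ((sqrt c * a) * sqrt (tau g * real (card {k. grp k = g})))
                  ((\<Sum>k\<in>{k\<in>fb. grp k = g}. s k)
                   + (1 / real CARD('j)) * (\<Sum>k\<in>{k. k \<notin> fb \<and> grp k = g}. \<Sum>j\<in>UNIV. t k j))" for g
    using psd2_scale[OF conjunct1[OF conjunct2[OF F], rule_format, of g] assms(2)] by (simp add: ac_simps)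
  moreover have "rfb' k Q + (1 - s k) / delta \<ge> c * R (grp k)" if "k \<in> fb" for k
  proof -
    have a: "rfb k Q + (1 - s k) / delta \<ge> R (grp k)" using F that by blast
    have b: "rfb k Q - rfb' k Q \<le> (1 - c) * R (grp k)" using assms(4) that by blast
    have "(1 - c) * R (grp k) = R (grp k) - c * R (grp k)" by (simp add: algebra_simps)
    then show ?thesis using a b by linarith
  qed
  moreover have "rvir' k j Q + (1 - t k j) / delta \<ge> c * R (grp k)" if "k \<notin> fb" for k j
  proof -
    have a: "rvir k j Q + (1 - t k j) / delta \<ge> R (grp k)" using F that by blast
    have b: "rvir k j Q - rvir' k j Q \<le> (1 - c) * R (grp k)" using assms(5) that by blast
    have "(1 - c) * R (grp k) = R (grp k) - c * R (grp k)" by (simp add: algebra_simps)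
    then show ?thesis using a b by linarith
  qed
  ultimately show ?thesis using F unfolding feas_def by simp
qed

lemma Iint_lin: "Iint (\<lambda>g. A g + c *\<^sub>R B g) g v = Iint A g v + c * Iint B g v"
  unfolding Iint_def trQh_add_scale by (simp add: sum.distrib sum_distrib_left)

theorem proposition2:
  fixes P :: "'b::finite \<Rightarrow> real"
    and Bs :: "'g::finite \<Rightarrow> 'b set"
    and tau :: "'g \<Rightarrow> real"
    and grp :: "'k::finite \<Rightarrow> 'g"
    and fb :: "'k set"
    and delta :: real
    and h :: "'k \<Rightarrow> ('m::finite,'b) cvec"
    and hv :: "'k \<Rightarrow> 'j::finite \<Rightarrow> ('m,'b) cvec"
    and Qt0 :: "'g \<Rightarrow> ('m,'b) cmat"
    and z :: "nat \<Rightarrow> ('g,'m,'b,'k,'j) pt"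
    and x :: "('g,'m,'b,'k,'j) pt"
  assumes P_nonneg: "\<forall>b. 0 \<le> P b"
    and tau_pos: "\<forall>g. 0 < tau g"
    and delta_pos: "0 < delta"
    and init: "Qt0 \<in> Qset P Bs"
    and iter: "\<forall>n. optimal_in
                 (feas_surr P Bs tau grp fb delta h hv
                    (if n = 0 then Qt0 else fst (z (n - 1))))
                 (z n)"
    and lim: "limit_point z x"
  shows "stationary (feas_RPF P Bs tau grp fb delta h hv) x"
proof -
  define Qs where "Qs n = fst (z n)" for n
  define Rs where "Rs n = fst (snd (z n))" for n
  define ss where "ss n = fst (snd (snd (z n)))" for n
  define ts where "ts n = fst (snd (snd (snd (z n))))" for n
  define as where "as n = snd (snd (snd (snd (z n))))" for n
  have zeq: "z n = (Qs n, Rs n, ss n, ts n, as n)" for n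
    by (simp add: Qs_def Rs_def ss_def ts_def as_def)
  obtain Qx Rx sx tx ax where xeq: "x = (Qx, Rx, sx, tx, ax)" by (metis prod.exhaust)
  define Qt where "Qt n = (if n = 0 then Qt0 else Qs (n - 1))" for n
  have it: "optimal_in (feas_surr P Bs tau grp fb delta h hv (Qt n)) (z n)" for n
    using iter unfolding Qt_def Qs_def by auto
  have zs: "z n \<in> feas_surr P Bs tau grp fb delta h hv (Qt n)" for n
    using it[of n] unfolding optimal_in_def by auto
  have QsQ: "Qs n \<in> Qset P Bs" for n using zs[of n] unfolding zeq feas_surr_def feas_def by simp
  have QtQ: "Qt n \<in> Qset P Bs" for n using init QsQ unfolding Qt_def by auto
  have zR: "z n \<in> feas_RPF P Bs tau grp fb delta h hv" for n
  proof -
    have "(Qs n, (\<lambda>g. 1 * Rs n g), ss n, ts n, sqrt 1 * as n) \<in> feas_RPF P Bs tau grp fb delta h hv"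
      unfolding feas_RPF_def
      by (rule feas_scale[OF zs[of n, unfolded zeq feas_surr_def]])
         (simp_all add: gap(1)[OF QsQ[of n] QtQ[of n]])
    then show ?thesis unfolding zeq by simp
  qed
  have zS: "z n \<in> feas_surr P Bs tau grp fb delta h hv (Qt (Suc n))" for n
  proof -
    have "(Qs n, (\<lambda>g. 1 * Rs n g), ss n, ts n, sqrt 1 * as n) \<in> feas_surr P Bs tau grp fb delta h hv (Qs n)"
      unfolding feas_surr_def
      by (rule feas_scale[OF zR[of n, unfolded zeq feas_RPF_def]])
         (simp_all add: rhobar_self[OF QsQ[of n]])
    then show ?thesis unfolding zeq Qt_def by simp
  qed
  have objz: "obj (z n) = as n" for n unfolding zeq obj_def by simp
  have mono: "as n \<le> as (Suc n)" for n
  proof -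
    have "obj (z n) \<le> obj (z (Suc n))" using it[of "Suc n"] zS[of n] unfolding optimal_in_def by blast
    then show ?thesis by (simp add: objz)
  qed
  then have inc: "incseq as" by (rule incseq_SucI)
  from lim obtain \<sigma> where sm: "strict_mono \<sigma>" and Lz0: "(z \<circ> \<sigma>) \<longlonglongrightarrow> x"
    unfolding limit_point_def by blast
  have Lz: "(\<lambda>n. z (\<sigma> n)) \<longlonglongrightarrow> x" using Lz0 by (simp add: comp_def)
  have LQ0: "(\<lambda>n. Qs (\<sigma> n)) \<longlonglongrightarrow> Qx"
    using tendsto_fst[OF Lz] unfolding zeq xeq by simp
  have LQ: "(\<lambda>n. Qs (\<sigma> n) g) \<longlonglongrightarrow> Qx g" for g by (rule tendsto_fun_app[OF LQ0])
  have LR0: "(\<lambda>n. Rs (\<sigma> n)) \<longlonglongrightarrow> Rx"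
    using tendsto_fst[OF tendsto_snd[OF Lz]] unfolding zeq xeq by simp
  have LR: "(\<lambda>n. Rs (\<sigma> n) g) \<longlonglongrightarrow> Rx g" for g by (rule tendsto_fun_app[OF LR0])
  have Ls0: "(\<lambda>n. ss (\<sigma> n)) \<longlonglongrightarrow> sx"
    using tendsto_fst[OF tendsto_snd[OF tendsto_snd[OF Lz]]] unfolding zeq xeq by simp
  have Ls: "(\<lambda>n. ss (\<sigma> n) k) \<longlonglongrightarrow> sx k" for k by (rule tendsto_fun_app[OF Ls0])
  have Lt0: "(\<lambda>n. ts (\<sigma> n)) \<longlonglongrightarrow> tx"
    using tendsto_fst[OF tendsto_snd[OF tendsto_snd[OF tendsto_snd[OF Lz]]]] unfolding zeq xeq by simp
  have Lt: "(\<lambda>n. ts (\<sigma> n) k j) \<longlonglongrightarrow> tx k j" for k j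
    by (rule tendsto_fun_app[OF tendsto_fun_app[OF Lt0]])
  have La: "(\<lambda>n. as (\<sigma> n)) \<longlonglongrightarrow> ax"
    using tendsto_snd[OF tendsto_snd[OF tendsto_snd[OF tendsto_snd[OF Lz]]]] unfolding zeq xeq by simp
  have asx: "as n \<le> ax" for n
  proof (rule LIMSEQ_le_const[OF La])
    show "\<exists>N. \<forall>m\<ge>N. as n \<le> as (\<sigma> m)"
    proof (intro exI allI impI)
      fix m assume "n \<le> m"
      then have "n \<le> \<sigma> m" using seq_suble[OF sm, of m] by simp
      then show "as n \<le> as (\<sigma> m)" using inc by (simp add: incseq_def)
    qed
  qed
  obtain p0 where p0: "p0 \<in> feas_surr P Bs tau grp fb delta h hv (Qt 0)" "0 < obj p0"
    using witness[OF QtQ[of 0] tau_pos delta_pos, where grp=grp and fb=fb and h=h and hv=hv] by blast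
  have "obj p0 \<le> as 0" using it[of 0] p0(1) unfolding optimal_in_def objz by auto
  then have ax0: "0 < ax" using p0(2) asx[of 0] by linarith
  have xR: "x \<in> feas_RPF P Bs tau grp fb delta h hv"
    unfolding xeq
    by (rule feas_RPF_closed[where Qs="\<lambda>n. Qs (\<sigma> n)" and Rs="\<lambda>n. Rs (\<sigma> n)" and ss="\<lambda>n. ss (\<sigma> n)"
          and ts="\<lambda>n. ts (\<sigma> n)" and as="\<lambda>n. as (\<sigma> n)", OF _ LQ LR Ls Lt La])
       (use zR zeq delta_pos in auto)
  show ?thesis
    unfolding stationary_def
  proof (intro conjI notI)
    show "x \<in> feas_RPF P Bs tau grp fb delta h hv" by (rule xR)
    assume "\<exists>d D. feasible_direction (feas_RPF P Bs tau grp fb delta h hv) x d \<and>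
      ((\<lambda>\<tau>. (obj (pstep x \<tau> d) - obj x) / \<tau>) \<longlongrightarrow> D) (at_right 0) \<and> 0 < D"
    then obtain d D where FD: "feasible_direction (feas_RPF P Bs tau grp fb delta h hv) x d"
      and TD: "((\<lambda>\<tau>. (obj (pstep x \<tau> d) - obj x) / \<tau>) \<longlongrightarrow> D) (at_right 0)" and D0: "0 < D"
      by blast
    obtain dQ dR ds dt da where deq: "d = (dQ, dR, ds, dt, da)" by (metis prod.exhaust)
    define Qp where "Qp \<tau> = (\<lambda>g. Qx g + \<tau> *\<^sub>R dQ g)" for \<tau>
    define Rp where "Rp \<tau> = (\<lambda>g. Rx g + \<tau> * dR g)" for \<tau>
    define sp where "sp \<tau> = (\<lambda>k. sx k + \<tau> * ds k)" for \<tau>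
    define tp where "tp \<tau> = (\<lambda>k j. tx k j + \<tau> * dt k j)" for \<tau>
    have peq: "pstep x \<tau> d = (Qp \<tau>, Rp \<tau>, sp \<tau>, tp \<tau>, ax + \<tau> * da)" for \<tau>
      unfolding pstep_def xeq deq Qp_def Rp_def sp_def tp_def by simp
    have "((\<lambda>\<tau>. (obj (pstep x \<tau> d) - obj x) / \<tau>) \<longlongrightarrow> da) (at_right 0)"
    proof (rule Lim_transform_eventually[OF tendsto_const])
      show "\<forall>\<^sub>F \<tau> in at_right 0. da = (obj (pstep x \<tau> d) - obj x) / \<tau>"
        using eventually_at_right_less[of "0::real"] by eventually_elim (simp only: peq, simp add: obj_def xeq)
    qed
    then have "da = D" by (rule tendsto_unique[OF trivial_limit_at_right_real _ TD])
    then have da0: "0 < da" using D0 by simp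
    from FD obtain \<epsilon> where eps: "0 < \<epsilon>"
      "\<forall>\<tau>. 0 < \<tau> \<and> \<tau> \<le> \<epsilon> \<longrightarrow> pstep x \<tau> d \<in> feas_RPF P Bs tau grp fb delta h hv"
      unfolding feasible_direction_def by blast
    note XF = xR[unfolded xeq feas_RPF_def feas_def mem_Collect_eq prod.case]
    have Rpos: "0 < Rx (grp k)" for k
    proof -
      have "\<exists>S. psd2 (Rx (grp k)) (ax * sqrt (tau (grp k) * real (card {k'. grp k' = grp k}))) S"
        using XF by blast
      then obtain S where S: "psd2 (Rx (grp k)) (ax * sqrt (tau (grp k) * real (card {k'. grp k' = grp k}))) S"
        by blast
      have "k \<in> {k'. grp k' = grp k}" by simp
      then have "0 < card {k'. grp k' = grp k}" by (auto simp: card_gt_0_iff)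
      then have "0 < ax * sqrt (tau (grp k) * real (card {k'. grp k' = grp k}))"
        using ax0 tau_pos by simp
      then show ?thesis using psd2_pos[OF S] by (metis less_irrefl)
    qed
    have ev1: "\<forall>\<^sub>F \<tau> in at_right 0. 0 < \<tau> \<and> \<tau> < \<epsilon>"
      using eventually_at_right_less[of "0::real"]
        order_tendstoD(2)[OF tendsto_ident_at[of "0::real" "{0<..}"] eps(1)]
      by eventually_elim auto
    have ev2: "\<forall>\<^sub>F \<tau> in at_right 0. \<forall>k. Rx (grp k) / 2 < Rx (grp k) + \<tau> * dR (grp k)"
    proof (rule eventually_all_finite)
      fix k
      have "((\<lambda>\<tau>. Rx (grp k) + \<tau> * dR (grp k)) \<longlongrightarrow> Rx (grp k) + 0 * dR (grp k)) (at_right 0)"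
        by (intro tendsto_intros)
      then show "\<forall>\<^sub>F \<tau> in at_right 0. Rx (grp k) / 2 < Rx (grp k) + \<tau> * dR (grp k)"
        by (rule order_tendstoD(1)) (use Rpos[of k] in simp)
    qed
    have evD: "\<forall>\<^sub>F \<tau> in at_right 0. 4 * \<tau> * (Dd)^2 * (ax + \<tau> * da) < ln 2 * da * Rx g"
      if "0 < Rx g" for Dd g
    proof -
      have "((\<lambda>\<tau>. 4 * \<tau> * (Dd)^2 * (ax + \<tau> * da)) \<longlongrightarrow> 4 * 0 * (Dd)^2 * (ax + 0 * da)) (at_right 0)"
        by (intro tendsto_intros)
      then show ?thesis by (rule order_tendstoD(2)) (use that da0 in simp)
    qed
    have ev3: "\<forall>\<^sub>F \<tau> in at_right 0. \<forall>k. 4 * \<tau> * (Iint dQ (grp k) (h k))^2 * (ax + \<tau> * da) < ln 2 * da * Rx (grp k)"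
      by (rule eventually_all_finite) (rule evD[OF Rpos])
    have ev4: "\<forall>\<^sub>F \<tau> in at_right 0. \<forall>k j. 4 * \<tau> * (Iint dQ (grp k) (hv k j))^2 * (ax + \<tau> * da) < ln 2 * da * Rx (grp k)"
      by (rule eventually_all_finite, rule eventually_all_finite) (rule evD[OF Rpos])
    have "\<forall>\<^sub>F \<tau> in at_right 0. (0 < \<tau> \<and> \<tau> < \<epsilon>) \<and> (\<forall>k. Rx (grp k) / 2 < Rx (grp k) + \<tau> * dR (grp k))
       \<and> (\<forall>k. 4 * \<tau> * (Iint dQ (grp k) (h k))^2 * (ax + \<tau> * da) < ln 2 * da * Rx (grp k))
       \<and> (\<forall>k j. 4 * \<tau> * (Iint dQ (grp k) (hv k j))^2 * (ax + \<tau> * da) < ln 2 * da * Rx (grp k))"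
      using ev1 ev2 ev3 ev4 by eventually_elim blast
    then obtain \<tau> where tau0: "0 < \<tau>" "\<tau> < \<epsilon>"
      and T2: "\<And>k. Rx (grp k) / 2 < Rx (grp k) + \<tau> * dR (grp k)"
      and T3: "\<And>k. 4 * \<tau> * (Iint dQ (grp k) (h k))^2 * (ax + \<tau> * da) < ln 2 * da * Rx (grp k)"
      and T4: "\<And>k j. 4 * \<tau> * (Iint dQ (grp k) (hv k j))^2 * (ax + \<tau> * da) < ln 2 * da * Rx (grp k)"
      using eventually_happens'[OF trivial_limit_at_right_real] by blast
    have pR': "(Qp \<tau>, Rp \<tau>, sp \<tau>, tp \<tau>, ax + \<tau> * da) \<in> feas_RPF P Bs tau grp fb delta h hv"
      using eps(2) tau0 peq[of \<tau>] by auto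
    have QpQ: "Qp \<tau> \<in> Qset P Bs" using pR' unfolding feas_RPF_def feas_def by simp
    define A where "A = ax + \<tau> * da"
    have A0: "0 < A" unfolding A_def using ax0 tau0 da0 by (simp add: add_pos_pos)
    define mu where "mu = (2 * ax + \<tau> * da) / (2 * A)"
    define c where "c = mu^2"
    have mu0: "0 \<le> mu" unfolding mu_def using A0 ax0 tau0 da0 by simp
    have mu1: "mu \<le> 1" unfolding mu_def A_def using ax0 tau0 da0 by (simp add: divide_le_eq_1 add_pos_pos)
    have c01: "0 \<le> c" "c \<le> 1" unfolding c_def using mu0 mu1 by (auto simp: power_le_one)
    have sqc: "sqrt c = mu" unfolding c_def using mu0 by simp
    have om: "1 - mu = \<tau> * da / (2 * A)" unfolding mu_def A_def using A0[unfolded A_def]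
      by (simp add: field_simps)
    have oneminus: "\<tau> * da / (2 * (ax + \<tau> * da)) \<le> 1 - c"
    proof -
      have "1 - c = (1 - mu) * (1 + mu)" unfolding c_def by (simp add: algebra_simps power2_eq_square)
      also have "\<dots> \<ge> (1 - mu) * 1" using mu0 mu1 by (intro mult_left_mono) auto
      finally show ?thesis using om unfolding A_def by simp
    qed
    have objw: "ax < mu * A" unfolding mu_def using A0 tau0 da0 by (simp add: field_simps)
    have user: "\<forall>\<^sub>F n in sequentially. rho g v (Qp \<tau>) - rhobar g v (Qp \<tau>) (Qs (\<sigma> n)) \<le> (1 - c) * Rp \<tau> g"
      if u1: "4 * \<tau> * (Iint dQ g v)^2 * (ax + \<tau> * da) < ln 2 * da * Rx g"
        and u2: "Rx g / 2 < Rx g + \<tau> * dR g" and u3: "0 < Rx g" for g v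
    proof -
      have lim: "(\<lambda>n. (Iint (Qp \<tau>) g v - Iint (Qs (\<sigma> n)) g v)^2 / ln 2)
          \<longlonglongrightarrow> (Iint (Qp \<tau>) g v - Iint Qx g v)^2 / ln 2"
        by (intro tendsto_intros Iint_tendsto LQ) simp
      have eq: "Iint (Qp \<tau>) g v - Iint Qx g v = \<tau> * Iint dQ g v" unfolding Qp_def Iint_lin by simp
      have lt: "(\<tau> * Iint dQ g v)^2 / ln 2 < (1 - c) * Rp \<tau> g"
        by (rule choose_ineq[OF tau0(1) da0 ax0 u3 _ u1 oneminus]) (use u2 in \<open>simp add: Rp_def\<close>)
      have "\<forall>\<^sub>F n in sequentially. (Iint (Qp \<tau>) g v - Iint (Qs (\<sigma> n)) g v)^2 / ln 2 < (1 - c) * Rp \<tau> g"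
        using order_tendstoD(2)[OF lim] lt eq by simp
      then show ?thesis
      proof (rule eventually_mono)
        fix n assume "(Iint (Qp \<tau>) g v - Iint (Qs (\<sigma> n)) g v)^2 / ln 2 < (1 - c) * Rp \<tau> g"
        then show "rho g v (Qp \<tau>) - rhobar g v (Qp \<tau>) (Qs (\<sigma> n)) \<le> (1 - c) * Rp \<tau> g"
          using gap(2)[OF QpQ QsQ[of "\<sigma> n"], of g v] by linarith
      qed
    qed
    have evA: "\<forall>\<^sub>F n in sequentially. \<forall>k. rho (grp k) (h k) (Qp \<tau>) - rhobar (grp k) (h k) (Qp \<tau>) (Qs (\<sigma> n)) \<le> (1 - c) * Rp \<tau> (grp k)"
      by (rule eventually_all_finite) (rule user[OF T3 T2 Rpos])
    have evB: "\<forall>\<^sub>F n in sequentially. \<forall>k j. rho (grp k) (hv k j) (Qp \<tau>) - rhobar (grp k) (hv k j) (Qp \<tau>) (Qs (\<sigma> n)) \<le> (1 - c) * Rp \<tau> (grp k)"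
      by (rule eventually_all_finite, rule eventually_all_finite) (rule user[OF T4 T2 Rpos])
    obtain n where nA: "\<And>k. rho (grp k) (h k) (Qp \<tau>) - rhobar (grp k) (h k) (Qp \<tau>) (Qs (\<sigma> n)) \<le> (1 - c) * Rp \<tau> (grp k)"
      and nB: "\<And>k j. rho (grp k) (hv k j) (Qp \<tau>) - rhobar (grp k) (hv k j) (Qp \<tau>) (Qs (\<sigma> n)) \<le> (1 - c) * Rp \<tau> (grp k)"
      using eventually_happens'[OF sequentially_bot eventually_conj[OF evA evB]] by blast
    have wS: "(Qp \<tau>, (\<lambda>g. c * Rp \<tau> g), sp \<tau>, tp \<tau>, sqrt c * (ax + \<tau> * da))
        \<in> feas_surr P Bs tau grp fb delta h hv (Qs (\<sigma> n))"
      unfolding feas_surr_def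
      by (rule feas_scale[OF pR'[unfolded feas_RPF_def] c01]) (use nA nB in auto)
    have "obj (Qp \<tau>, (\<lambda>g. c * Rp \<tau> g), sp \<tau>, tp \<tau>, sqrt c * (ax + \<tau> * da)) \<le> obj (z (Suc (\<sigma> n)))"
      using it[of "Suc (\<sigma> n)"] wS unfolding optimal_in_def Qt_def by auto
    then have "mu * A \<le> ax" using asx[of "Suc (\<sigma> n)"] sqc objz[of "Suc (\<sigma> n)"] unfolding A_def by (simp add: obj_def)
    then show False using objw by linarith
  qed
qed
end
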